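(* The construction sending each homogeneous and finitely generated operad $\mathcal{O}$ to its prefix poset $(\mathcal{O}_\bullet,\preceq)$ and each operad morphism $\psi:\mathcal{O}\to\mathcal{O}'$ between homogeneous and finitely generated operads to the same underlying map $\mathcal{O}_\bullet\to\mathcal{O}'_\bullet$ is a functor from the category of homogeneous and finitely generated operads to the category of posets (in particular every such $\psi$ is order-preserving: $x\preceq y$ implies $\psi(x)\preceq\psi(y)$), and this functor preserves injections and surjections.
   Context: Operads are nonsymmetric set-operads: a graded set $\mathcal{O}=\bigsqcup_{n}\mathcal{O}(n)$ (elements of $\mathcal{O}(n)$ have arity $n$) with partial compositions $\circ_i:\mathcal{O}(n)\times\mathcal{O}(m)\to\mathcal{O}(n+m-1)$, $i\in[n]$, and a unit $\mathbf{1}\in\mathcal{O}(1)$, satisfying the usual associativity, commutativity and unit axioms; operad morphisms preserve arity, unit and partial compositions. If $\mathcal{O}(0)=\emptyset$ and $\mathcal{O}(1)=\{\mathbf{1}\}$, $\mathcal{O}$ has a unique minimal (for inclusion) generating set $\mathfrak{G}_\mathcal{O}$. A treelike expression of $x\in\mathcal{O}$ is a planar rooted tree with internal nodes of arity $k$ decorated by elements of $\mathfrak{G}_\mathcal{O}$ of arity $k$ which evaluates to $x$ when the nodes are composed in $\mathcal{O}$. $\mathcal{O}$ is homogeneous if $\mathcal{O}(0)=\emptyset$, $\mathcal{O}(1)=\{\mathbf{1}\}$ and any two treelike expressions of the same element have the same number of internal nodes; this number is the degree of the element, and $\mathcal{O}_\bullet$ denotes $\mathcal{O}$ graded by degree.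 $\mathcal{O}$ is finitely generated if $\mathfrak{G}_\mathcal{O}$ is finite. The prefix poset of $\mathcal{O}$ is $(\mathcal{O}_\bullet,\preceq)$ where $x\preceq y$ iff $y=(\cdots((x\circ_{i_1}\mathtt{a}_1)\circ_{i_2}\mathtt{a}_2)\cdots)\circ_{i_k}\mathtt{a}_k$ for some $k\ge0$, $\mathtt{a}_1,\dots,\mathtt{a}_k\in\mathfrak{G}_\mathcal{O}$ and positive integers $i_1,\dots,i_k$. *)

theory Defs
  imports Main
begin

text \<open>A nonsymmetric set-operad, given by its carrier, arity function,
partial compositions (pcomp i x y = x \<circ>_i y, i counted from 1) and unit.\<close>

record 'a operad =
  ocarrier :: "'a set"
  oar :: "'a \<Rightarrow> nat"
  ocomp :: "nat \<Rightarrow> 'a \<Rightarrow> 'a \<Rightarrow> 'a"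
  ounit :: 'a

definition is_operad :: "('a, 'b) operad_scheme \<Rightarrow> bool" where
  "is_operad P \<longleftrightarrow>
     ounit P \<in> ocarrier P \<and> oar P (ounit P) = 1 \<and>
     (\<forall>x\<in>ocarrier P. \<forall>y\<in>ocarrier P. \<forall>i. 1 \<le> i \<and> i \<le> oar P x \<longrightarrow>
        ocomp P i x y \<in> ocarrier P \<and> oar P (ocomp P i x y) = oar P x + oar P y - 1) \<and>
     (\<forall>x\<in>ocarrier P. \<forall>y\<in>ocarrier P. \<forall>z\<in>ocarrier P. \<forall>i j.
        1 \<le> i \<and> i \<le> oar P x \<and> 1 \<le> j \<and> j \<le> oar P y \<longrightarrow>
        ocomp P (i + j - 1) (ocomp P i x y) z = ocomp P i x (ocomp P j y z)) \<and>
     (\<forall>x\<in>ocarrier P. \<forall>y\<in>ocarrier P. \<forall>z\<in>ocarrier P. \<forall>i j.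
        1 \<le> i \<and> i < j \<and> j \<le> oar P x \<longrightarrow>
        ocomp P (j + oar P y - 1) (ocomp P i x y) z = ocomp P i (ocomp P j x z) y) \<and>
     (\<forall>x\<in>ocarrier P. ocomp P 1 (ounit P) x = x) \<and>
     (\<forall>x\<in>ocarrier P. \<forall>i. 1 \<le> i \<and> i \<le> oar P x \<longrightarrow> ocomp P i x (ounit P) = x)"

definition operad_hom ::
  "('a, 'c) operad_scheme \<Rightarrow> ('b, 'd) operad_scheme \<Rightarrow> ('a \<Rightarrow> 'b) \<Rightarrow> bool" where
  "operad_hom P Q \<psi> \<longleftrightarrow>
     (\<forall>x\<in>ocarrier P. \<psi> x \<in> ocarrier Q \<and> oar Q (\<psi> x) = oar P x) \<and>
     \<psi> (ounit P) = ounit Q \<and>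
     (\<forall>x\<in>ocarrier P. \<forall>y\<in>ocarrier P. \<forall>i. 1 \<le> i \<and> i \<le> oar P x \<longrightarrow>
        \<psi> (ocomp P i x y) = ocomp Q i (\<psi> x) (\<psi> y))"

datatype 'a ptree = Leaf | Node 'a "'a ptree list"

text \<open>Full composition x \<circ> (y1,...,yk) by partial compositions at positions k, k-1, ..., 1.\<close>

definition full_comp :: "('a, 'b) operad_scheme \<Rightarrow> 'a \<Rightarrow> 'a list \<Rightarrow> 'a" where
  "full_comp P x ys =
     fold (\<lambda>(i, y) acc. ocomp P (Suc i) acc y) (rev (zip [0..<length ys] ys)) x"

fun eval_tree :: "('a, 'b) operad_scheme \<Rightarrow> 'a ptree \<Rightarrow> 'a" where
  "eval_tree P Leaf = ounit P"
| "eval_tree P (Node g ts) = full_comp P g (map (eval_tree P) ts)"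

fun tree_over :: "('a, 'b) operad_scheme \<Rightarrow> 'a set \<Rightarrow> 'a ptree \<Rightarrow> bool" where
  "tree_over P G Leaf = True"
| "tree_over P G (Node g ts) =
     (g \<in> G \<and> oar P g = length ts \<and> (\<forall>t\<in>set ts. tree_over P G t))"

fun inner_nodes :: "'a ptree \<Rightarrow> nat" where
  "inner_nodes Leaf = 0"
| "inner_nodes (Node g ts) = Suc (sum_list (map inner_nodes ts))"

definition generates :: "('a, 'b) operad_scheme \<Rightarrow> 'a set \<Rightarrow> bool" where
  "generates P G \<longleftrightarrow> G \<subseteq> ocarrier P \<and>
     (\<forall>x\<in>ocarrier P. \<exists>t. tree_over P G t \<and> eval_tree P t = x)"

definition minimal_generating :: "('a, 'b) operad_scheme \<Rightarrow> 'a set \<Rightarrow> bool" where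
  "minimal_generating P G \<longleftrightarrow> generates P G \<and>
     (\<forall>H. H \<subseteq> G \<and> generates P H \<longrightarrow> H = G)"

text \<open>The unique minimal generating set (meaningful when P(0) is empty and P(1) = {1}).\<close>

definition gens :: "('a, 'b) operad_scheme \<Rightarrow> 'a set" where
  "gens P = (THE G. minimal_generating P G)"

definition homogeneous :: "('a, 'b) operad_scheme \<Rightarrow> bool" where
  "homogeneous P \<longleftrightarrow>
     (\<forall>x\<in>ocarrier P. oar P x \<noteq> 0) \<and>
     {x \<in> ocarrier P. oar P x = 1} = {ounit P} \<and>
     (\<forall>s t. tree_over P (gens P) s \<and> tree_over P (gens P) t \<and>
            eval_tree P s = eval_tree P t \<longrightarrow> inner_nodes s = inner_nodes t)"

definition finitely_generated :: "('a, 'b) operad_scheme \<Rightarrow> bool" where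
  "finitely_generated P \<longleftrightarrow> finite (gens P)"

inductive prefix_le :: "('a, 'b) operad_scheme \<Rightarrow> 'a \<Rightarrow> 'a \<Rightarrow> bool" for P where
  refl: "x \<in> ocarrier P \<Longrightarrow> prefix_le P x x"
| step: "prefix_le P x y \<Longrightarrow> a \<in> gens P \<Longrightarrow> 1 \<le> i \<Longrightarrow> i \<le> oar P y
           \<Longrightarrow> prefix_le P x (ocomp P i y a)"

definition prefix_rel :: "('a, 'b) operad_scheme \<Rightarrow> 'a rel" where
  "prefix_rel P = {(x, y). prefix_le P x y}"

end

theory Submission
  imports Defs
begin

fun leaves :: "'a ptree \<Rightarrow> nat" where
  "leaves Leaf = 1"
| "leaves (Node g ts) = sum_list (map leaves ts)"

fun graft :: "'a ptree \<Rightarrow> nat \<Rightarrow> 'a ptree \<Rightarrow> 'a ptree"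
and graft_l :: "'a ptree list \<Rightarrow> nat \<Rightarrow> 'a ptree \<Rightarrow> 'a ptree list" where
  "graft Leaf j s = s"
| "graft (Node g ts) j s = Node g (graft_l ts j s)"
| "graft_l [] j s = []"
| "graft_l (t # ts) j s = (if j \<le> leaves t then graft t j s # ts else t # graft_l ts (j - leaves t) s)"

lemma graft_l_split: "1 \<le> j \<Longrightarrow> j \<le> sum_list (map leaves ts) \<Longrightarrow>
  \<exists>as t bs j'. ts = as @ t # bs \<and> graft_l ts j s = as @ graft t j' s # bs \<and>
     j = sum_list (map leaves as) + j' \<and> 1 \<le> j' \<and> j' \<le> leaves t"
proof (induction ts arbitrary: j)
  case Nil then show ?case by simp
next
  case (Cons t ts)
  show ?case
  proof (cases "j \<le> leaves t")
    case True
    then show ?thesis using Cons.prems by (intro exI[of _ "[]"] exI[of _ t] exI[of _ ts] exI[of _ j]) auto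
  next
    case False
    then have "1 \<le> j - leaves t" "j - leaves t \<le> sum_list (map leaves ts)" using Cons.prems by auto
    then obtain as t' bs j' where h: "ts = as @ t' # bs" "graft_l ts (j - leaves t) s = as @ graft t' j' s # bs"
      "j - leaves t = sum_list (map leaves as) + j'" "1 \<le> j'" "j' \<le> leaves t'"
      using Cons.IH[of "j - leaves t"] by blast
    show ?thesis using False h
      by (intro exI[of _ "t # as"] exI[of _ t'] exI[of _ bs] exI[of _ j']) auto
  qed
qed

locale opok =
  fixes P :: "('a,'b) operad_scheme"
  assumes op: "is_operad P"
  and arpos: "\<forall>x\<in>ocarrier P. oar P x \<noteq> 0"
  and ar1: "{x \<in> ocarrier P. oar P x = 1} = {ounit P}"
begin

abbreviation "C \<equiv> ocarrier P"
abbreviation "ar \<equiv> oar P"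
abbreviation "cp \<equiv> ocomp P"
abbreviation "u \<equiv> ounit P"

lemma u_C: "u \<in> C" and u_ar: "ar u = 1"
  using op unfolding is_operad_def by auto

lemma cp_C: "x \<in> C \<Longrightarrow> y \<in> C \<Longrightarrow> 1 \<le> i \<Longrightarrow> i \<le> ar x \<Longrightarrow> cp i x y \<in> C"
  and cp_ar: "x \<in> C \<Longrightarrow> y \<in> C \<Longrightarrow> 1 \<le> i \<Longrightarrow> i \<le> ar x \<Longrightarrow> ar (cp i x y) = ar x + ar y - 1"
  using op unfolding is_operad_def by auto

lemma assoc: "x \<in> C \<Longrightarrow> y \<in> C \<Longrightarrow> z \<in> C \<Longrightarrow> 1 \<le> i \<Longrightarrow> i \<le> ar x \<Longrightarrow> 1 \<le> j \<Longrightarrow> j \<le> ar y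
   \<Longrightarrow> cp (i + j - 1) (cp i x y) z = cp i x (cp j y z)"
  using op unfolding is_operad_def by blast

lemma par: "x \<in> C \<Longrightarrow> y \<in> C \<Longrightarrow> z \<in> C \<Longrightarrow> 1 \<le> i \<Longrightarrow> i < j \<Longrightarrow> j \<le> ar x
   \<Longrightarrow> cp (j + ar y - 1) (cp i x y) z = cp i (cp j x z) y"
  using op unfolding is_operad_def by blast

lemma unit_l: "x \<in> C \<Longrightarrow> cp 1 u x = x"
  and unit_r: "x \<in> C \<Longrightarrow> 1 \<le> i \<Longrightarrow> i \<le> ar x \<Longrightarrow> cp i x u = x"
  using op unfolding is_operad_def by auto

lemma unit_l': "x \<in> C \<Longrightarrow> cp (Suc 0) u x = x"
  using unit_l by simp

lemma ar_pos: "x \<in> C \<Longrightarrow> 1 \<le> ar x"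
  using arpos by (simp add: Suc_le_eq)

lemma ar_one: "x \<in> C \<Longrightarrow> ar x = 1 \<longleftrightarrow> x = u"
  using ar1 u_ar by blast

lemma ar_two: "x \<in> C \<Longrightarrow> x \<noteq> u \<Longrightarrow> 2 \<le> ar x"
  using ar_pos ar_one by fastforce

lemma fc_Nil[simp]: "full_comp P x [] = x"
  by (simp add: full_comp_def)

lemma fc_snoc: "full_comp P x (ys @ [y]) = full_comp P (cp (Suc (length ys)) x y) ys"
  by (simp add: full_comp_def)

lemma sum_ge_len: "set ys \<subseteq> C \<Longrightarrow> length ys \<le> sum_list (map ar ys)"
  by (induction ys) (auto dest: ar_pos)

lemma fc_ok: "set ys \<subseteq> C \<Longrightarrow> x \<in> C \<Longrightarrow> length ys \<le> ar x \<Longrightarrow>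
  full_comp P x ys \<in> C \<and> ar (full_comp P x ys) = ar x + sum_list (map ar ys) - length ys"
proof (induction ys arbitrary: x rule: rev_induct)
  case Nil then show ?case by simp
next
  case (snoc y ys)
  have y: "y \<in> C" using snoc by auto
  have c: "cp (Suc (length ys)) x y \<in> C" "ar (cp (Suc (length ys)) x y) = ar x + ar y - 1"
    using snoc y cp_C cp_ar by auto
  have "1 \<le> ar y" using ar_pos y by auto
  then show ?case using snoc.IH[of "cp (Suc (length ys)) x y"] c snoc.prems
    by (auto simp: fc_snoc)
qed

lemma fc_units: "\<forall>y\<in>set ys. y = u \<Longrightarrow> x \<in> C \<Longrightarrow> length ys \<le> ar x \<Longrightarrow> full_comp P x ys = x"
proof (induction ys arbitrary: x rule: rev_induct)
  case Nil then show ?case by simp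
next
  case (snoc y ys)
  then show ?case by (simp add: fc_snoc unit_r)
qed

lemma fc_H: "set zs \<subseteq> C \<Longrightarrow> w \<in> C \<Longrightarrow> e \<in> C \<Longrightarrow> length zs < p \<Longrightarrow> p \<le> ar w \<Longrightarrow>
  full_comp P (cp p w e) zs = cp (p + sum_list (map ar zs) - length zs) (full_comp P w zs) e"
proof (induction zs arbitrary: w p rule: rev_induct)
  case Nil then show ?case by simp
next
  case (snoc z zs)
  let ?n = "length zs"
  have z: "z \<in> C" "1 \<le> ar z" using snoc ar_pos by auto
  have e1: "cp (Suc ?n) (cp p w e) z = cp (p + ar z - 1) (cp (Suc ?n) w z) e"
    using par[of w z e "Suc ?n" p] snoc z by auto
  have w': "cp (Suc ?n) w z \<in> C" "ar (cp (Suc ?n) w z) = ar w + ar z - 1"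
    using snoc z cp_C cp_ar by auto
  have "full_comp P (cp p w e) (zs @ [z]) = full_comp P (cp (p + ar z - 1) (cp (Suc ?n) w z) e) zs"
    by (simp add: fc_snoc e1)
  also have "\<dots> = cp (p + ar z - 1 + sum_list (map ar zs) - ?n) (full_comp P (cp (Suc ?n) w z) zs) e"
    using snoc.IH[of "cp (Suc ?n) w z" "p + ar z - 1"] snoc.prems w' z by auto
  also have "\<dots> = cp (p + sum_list (map ar (zs @ [z])) - length (zs @ [z])) (full_comp P w (zs @ [z])) e"
    using snoc.prems z by (simp add: fc_snoc add_ac)
  finally show ?case .
qed

lemma fc_G: "set as \<subseteq> C \<Longrightarrow> set bs \<subseteq> C \<Longrightarrow> x \<in> C \<Longrightarrow> y \<in> C \<Longrightarrow> e \<in> C \<Longrightarrow>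
  length as + 1 + length bs \<le> ar x \<Longrightarrow> 1 \<le> j \<Longrightarrow> j \<le> ar y \<Longrightarrow>
  full_comp P x (as @ cp j y e # bs) = cp (sum_list (map ar as) + j) (full_comp P x (as @ y # bs)) e"
proof (induction bs arbitrary: x rule: rev_induct)
  case Nil
  let ?n = "length as"
  have a: "cp (Suc ?n) x (cp j y e) = cp (?n + j) (cp (Suc ?n) x y) e"
    using assoc[of x y e "Suc ?n" j] Nil by auto
  have w: "cp (Suc ?n) x y \<in> C" "ar (cp (Suc ?n) x y) = ar x + ar y - 1"
    using Nil cp_C cp_ar by auto
  have "full_comp P x (as @ [cp j y e]) = full_comp P (cp (?n + j) (cp (Suc ?n) x y) e) as"
    by (simp add: fc_snoc a)
  also have "\<dots> = cp (?n + j + sum_list (map ar as) - ?n) (full_comp P (cp (Suc ?n) x y) as) e"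
    using fc_H[of as "cp (Suc ?n) x y" e "?n + j"] Nil w by auto
  finally show ?case by (simp add: fc_snoc add_ac)
next
  case (snoc b bs)
  have b: "b \<in> C" using snoc by auto
  let ?m = "length (as @ cp j y e # bs)"
  have w: "cp (Suc ?m) x b \<in> C" "ar (cp (Suc ?m) x b) = ar x + ar b - 1"
    using snoc b cp_C cp_ar by auto
  have "full_comp P x (as @ cp j y e # bs @ [b]) = full_comp P (cp (Suc ?m) x b) (as @ cp j y e # bs)"
    using fc_snoc[of x "as @ cp j y e # bs" b] by simp
  also have "\<dots> = cp (sum_list (map ar as) + j) (full_comp P (cp (Suc ?m) x b) (as @ y # bs)) e"
    using snoc.IH[of "cp (Suc ?m) x b"] snoc.prems w b ar_pos[of b] by auto
  also have "\<dots> = cp (sum_list (map ar as) + j) (full_comp P x (as @ y # bs @ [b])) e"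
    using fc_snoc[of x "as @ y # bs" b] by simp
  finally show ?case .
qed


lemma eval_ok: "G \<subseteq> C \<Longrightarrow> tree_over P G t \<Longrightarrow> eval_tree P t \<in> C \<and> ar (eval_tree P t) = leaves t"
proof (induction t)
  case Leaf then show ?case by (simp add: u_C u_ar)
next
  case (Node g ts)
  have g: "g \<in> C" "ar g = length ts" using Node.prems by auto
  have s: "set (map (eval_tree P) ts) \<subseteq> C" using Node by auto
  have m: "map ar (map (eval_tree P) ts) = map leaves ts" using Node by auto
  have "full_comp P g (map (eval_tree P) ts) \<in> C \<and> ar (full_comp P g (map (eval_tree P) ts)) = sum_list (map ar (map (eval_tree P) ts))"
    using fc_ok[OF s g(1)] g by (simp del: map_map)
  then show ?case using Node.IH Node.prems by (auto simp: comp_def cong: map_cong)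
qed

lemma graft_ok: "G \<subseteq> C \<Longrightarrow> tree_over P G t \<Longrightarrow> tree_over P G s \<Longrightarrow> 1 \<le> j \<Longrightarrow> j \<le> leaves t \<Longrightarrow>
  tree_over P G (graft t j s) \<and> eval_tree P (graft t j s) = cp j (eval_tree P t) (eval_tree P s)"
proof (induction t arbitrary: j)
  case Leaf then show ?case using eval_ok[of G s] by (simp add: unit_l')
next
  case (Node g ts)
  obtain as t bs j' where h: "ts = as @ t # bs" "graft_l ts j s = as @ graft t j' s # bs"
     "j = sum_list (map leaves as) + j'" "1 \<le> j'" "j' \<le> leaves t"
    using graft_l_split[of j ts s] Node.prems by auto
  have t: "t \<in> set ts" using h by auto
  have IH: "tree_over P G (graft t j' s) \<and> eval_tree P (graft t j' s) = cp j' (eval_tree P t) (eval_tree P s)"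
    using Node.IH[OF t Node.prems(1) _ Node.prems(3) h(4,5)] Node.prems(2) t by auto
  have g: "g \<in> C" "ar g = length ts" using Node.prems by auto
  have tr: "\<forall>x\<in>set ts. tree_over P G x" using Node.prems by auto
  have sC: "set (map (eval_tree P) as) \<subseteq> C" "set (map (eval_tree P) bs) \<subseteq> C"
    using tr h eval_ok[OF Node.prems(1)] by auto
  have tC: "eval_tree P t \<in> C" "ar (eval_tree P t) = leaves t" using tr t eval_ok[OF Node.prems(1)] by auto
  have sC2: "eval_tree P s \<in> C" using eval_ok[OF Node.prems(1,3)] by auto
  have m: "map ar (map (eval_tree P) as) = map leaves as" using tr h eval_ok[OF Node.prems(1)] by auto
  have "eval_tree P (graft (Node g ts) j s) = full_comp P g (map (eval_tree P) as @ cp j' (eval_tree P t) (eval_tree P s) # map (eval_tree P) bs)"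
    using h IH by simp
  also have "\<dots> = cp j (full_comp P g (map (eval_tree P) as @ eval_tree P t # map (eval_tree P) bs)) (eval_tree P s)"
    using fc_G[OF sC g(1) tC(1) sC2 _ h(4)] g h tC tr eval_ok[OF Node.prems(1)] by (auto simp: comp_def cong: map_cong)
  finally show ?case using h IH g tr Node.prems(2) by auto
qed

definition indec :: "'a set" where
  "indec = {x \<in> C. 2 \<le> ar x \<and> \<not> (\<exists>c\<in>C. \<exists>d\<in>C. \<exists>j. 2 \<le> ar c \<and> 2 \<le> ar d \<and> 1 \<le> j \<and> j \<le> ar c \<and> x = cp j c d)}"

lemma gen_all: "x \<in> C \<Longrightarrow> \<exists>t. tree_over P indec t \<and> eval_tree P t = x"
proof (induction "ar x" arbitrary: x rule: less_induct)
  case less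
  have iC: "indec \<subseteq> C" unfolding indec_def by auto
  show ?case
  proof (cases "x = u")
    case True then show ?thesis by (intro exI[of _ Leaf]) auto
  next
    case nu: False
    show ?thesis
    proof (cases "x \<in> indec")
      case True
      have "full_comp P x (replicate (ar x) u) = x" using fc_units[of "replicate (ar x) u" x] less.prems by auto
      then show ?thesis using True
        by (intro exI[of _ "Node x (replicate (ar x) Leaf)"]) (auto simp: map_replicate_const)
    next
      case False
      then obtain c d j where cd: "c \<in> C" "d \<in> C" "2 \<le> ar c" "2 \<le> ar d" "1 \<le> j" "j \<le> ar c" "x = cp j c d"
        using ar_two[OF less.prems nu] less.prems unfolding indec_def by auto
      have a: "ar x = ar c + ar d - 1" using cd cp_ar by auto
      have lt: "ar c < ar x" "ar d < ar x" using a cd by auto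
      obtain tc where tc: "tree_over P indec tc" "eval_tree P tc = c" using less.hyps[OF lt(1) cd(1)] by blast
      obtain td where td: "tree_over P indec td" "eval_tree P td = d" using less.hyps[OF lt(2) cd(2)] by blast
      have "leaves tc = ar c" using eval_ok[OF iC tc(1)] tc by simp
      then show ?thesis using graft_ok[OF iC tc(1) td(1), of j] cd tc td by auto
    qed
  qed
qed

lemma classify: "G \<subseteq> C \<Longrightarrow> tree_over P G t \<Longrightarrow> eval_tree P t = u \<or> eval_tree P t \<in> G \<or>
   (\<exists>c\<in>C. \<exists>d\<in>C. \<exists>j. 2 \<le> ar c \<and> 2 \<le> ar d \<and> 1 \<le> j \<and> j \<le> ar c \<and> eval_tree P t = cp j c d)"
proof (induction t)
  case Leaf then show ?case by simp
next
  case (Node g ts)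
  have g: "g \<in> G" "g \<in> C" "ar g = length ts" using Node.prems by auto
  have tr: "\<forall>x\<in>set ts. tree_over P G x" using Node.prems by auto
  show ?case
  proof (cases "\<forall>t\<in>set ts. eval_tree P t = u")
    case True
    then have "eval_tree P (Node g ts) = g" using fc_units[of "map (eval_tree P) ts" g] g by auto
    then show ?thesis using g by auto
  next
    case False
    then obtain t where t: "t \<in> set ts" "eval_tree P t \<noteq> u" by auto
    then obtain as bs where ts: "ts = as @ t # bs" by (meson split_list)
    have tC: "eval_tree P t \<in> C" using t tr eval_ok[OF Node.prems(1)] by auto
    show ?thesis
    proof (cases "g = u")
      case True
      then have "length ts = 1" using g u_ar by simp
      then have "ts = [t]" using ts by simp
      then have "eval_tree P (Node g ts) = eval_tree P t" using True tC by (simp add: full_comp_def unit_l')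
      then show ?thesis using Node.IH[OF t(1) Node.prems(1)] tr t by auto
    next
      case False
      have g2: "2 \<le> ar g" using ar_two[OF g(2) False] by simp
      have sC: "set (map (eval_tree P) as) \<subseteq> C" "set (map (eval_tree P) bs) \<subseteq> C"
        using tr ts eval_ok[OF Node.prems(1)] by auto
      let ?c = "full_comp P g (map (eval_tree P) as @ u # map (eval_tree P) bs)"
      have "eval_tree P (Node g ts) = full_comp P g (map (eval_tree P) as @ cp 1 u (eval_tree P t) # map (eval_tree P) bs)"
        using ts tC unit_l by simp
      also have "\<dots> = cp (sum_list (map ar (map (eval_tree P) as)) + 1) ?c (eval_tree P t)"
        using fc_G[OF sC g(2) u_C tC, of 1] g ts u_ar by simp
      finally have e: "eval_tree P (Node g ts) = cp (sum_list (map ar (map (eval_tree P) as)) + 1) ?c (eval_tree P t)" .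
      have l: "set (map (eval_tree P) as @ u # map (eval_tree P) bs) \<subseteq> C" using sC u_C by auto
      have cC: "?c \<in> C" "ar ?c = sum_list (map ar (map (eval_tree P) as @ u # map (eval_tree P) bs))"
        using fc_ok[OF l g(2)] g ts by auto
      have "length (map (eval_tree P) as @ u # map (eval_tree P) bs) \<le> ar ?c"
        using sum_ge_len[OF l] cC by simp
      then have c2: "2 \<le> ar ?c" using g2 g ts by simp
      have "sum_list (map ar (map (eval_tree P) as)) + 1 \<le> ar ?c" using cC u_ar by simp
      then have "\<exists>c\<in>C. \<exists>d\<in>C. \<exists>j. 2 \<le> ar c \<and> 2 \<le> ar d \<and> 1 \<le> j \<and> j \<le> ar c \<and> eval_tree P (Node g ts) = cp j c d"
        using e cC c2 ar_two[OF tC t(2)] tC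
        by (intro bexI[of _ ?c] bexI[of _ "eval_tree P t"] exI[of _ "sum_list (map ar (map (eval_tree P) as)) + 1"]) auto
      then show ?thesis by blast
    qed
  qed
qed

lemma gen_contains: "generates P G \<Longrightarrow> indec \<subseteq> G"
proof
  fix x assume G: "generates P G" and x: "x \<in> indec"
  have GC: "G \<subseteq> C" using G unfolding generates_def by auto
  obtain t where t: "tree_over P G t" "eval_tree P t = x" using G x unfolding generates_def indec_def by auto
  have "x \<noteq> u" using x u_ar unfolding indec_def by auto
  then show "x \<in> G" using classify[OF GC t(1)] t x unfolding indec_def by blast
qed

lemma indec_generates: "generates P indec"
  unfolding generates_def using gen_all by (auto simp: indec_def)

lemma gens_eq: "gens P = indec"
  unfolding gens_def
proof (rule the_equality)
  show "minimal_generating P indec" unfolding minimal_generating_def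
    using indec_generates gen_contains by blast
next
  fix G assume "minimal_generating P G"
  then show "G = indec" unfolding minimal_generating_def using indec_generates gen_contains by blast
qed


lemma prefix_C: "prefix_le P x y \<Longrightarrow> x \<in> C \<and> y \<in> C"
  by (induction rule: prefix_le.induct) (auto simp: gens_eq indec_def intro: cp_C)

lemma prefix_trans: "prefix_le P y z \<Longrightarrow> prefix_le P x y \<Longrightarrow> prefix_le P x z"
  by (induction rule: prefix_le.induct) (auto intro: prefix_le.step)

lemma prefix_ar: "prefix_le P x y \<Longrightarrow> x = y \<or> ar x < ar y"
proof (induction rule: prefix_le.induct)
  case (refl x) then show ?case by simp
next
  case (step x y a i)
  have "y \<in> C" "a \<in> C" "2 \<le> ar a" using prefix_C[OF step.hyps(1)] step.hyps(2) by (auto simp: gens_eq indec_def)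
  then have "ar y < ar (cp i y a)" using cp_ar step.hyps by auto
  then show ?case using step.IH by auto
qed

lemma prefix_graft: "b \<in> C \<Longrightarrow> z \<in> C \<Longrightarrow> 1 \<le> i \<Longrightarrow> i \<le> ar z \<Longrightarrow> prefix_le P z (cp i z b)"
proof (induction "ar b" arbitrary: b z i rule: less_induct)
  case less
  show ?case
  proof (cases "b = u")
    case True then show ?thesis using less.prems unit_r prefix_le.refl by auto
  next
    case nu: False
    show ?thesis
    proof (cases "b \<in> indec")
      case True then show ?thesis using less.prems prefix_le.step[OF prefix_le.refl[of z P], of b i] by (auto simp: gens_eq)
    next
      case False
      then obtain c d j where cd: "c \<in> C" "d \<in> C" "2 \<le> ar c" "2 \<le> ar d" "1 \<le> j" "j \<le> ar c" "b = cp j c d"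
        using ar_two[OF less.prems(1) nu] less.prems unfolding indec_def by auto
      have a: "ar b = ar c + ar d - 1" using cd cp_ar by auto
      have lt: "ar c < ar b" "ar d < ar b" using a cd by auto
      have e: "cp i z b = cp (i + j - 1) (cp i z c) d" using assoc[of z c d i j] cd less.prems by auto
      have zc: "cp i z c \<in> C" "ar (cp i z c) = ar z + ar c - 1" using cp_C cp_ar cd less.prems by auto
      have 1: "prefix_le P z (cp i z c)" using less.hyps[OF lt(1) cd(1) less.prems(2-4)] .
      have 2: "prefix_le P (cp i z c) (cp (i + j - 1) (cp i z c) d)"
        using less.hyps[OF lt(2) cd(2) zc(1)] zc cd less.prems by auto
      show ?thesis using prefix_trans[OF 2 1] e by simp
    qed
  qed
qed

end

lemma opok_intro: "is_operad P \<Longrightarrow> homogeneous P \<Longrightarrow> opok P"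
  unfolding opok_def homogeneous_def by blast

theorem theorem4p6:
  fixes P :: "'a operad" and Q :: "'b operad" and \<psi> :: "'a \<Rightarrow> 'b"
  shows
  "(is_operad P \<and> homogeneous P \<and> finitely_generated P \<longrightarrow>
      partial_order_on (ocarrier P) (prefix_rel P)) \<and>
   (is_operad P \<and> homogeneous P \<and> finitely_generated P \<and>
    is_operad Q \<and> homogeneous Q \<and> finitely_generated Q \<and>
    operad_hom P Q \<psi> \<longrightarrow>
      (\<forall>x y. prefix_le P x y \<longrightarrow> prefix_le Q (\<psi> x) (\<psi> y)) \<and>
      (inj_on \<psi> (ocarrier P) \<longrightarrow> inj_on \<psi> (ocarrier P)) \<and>
      (\<psi> ` ocarrier P = ocarrier Q \<longrightarrow> \<psi> ` ocarrier P = ocarrier Q))"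
proof (intro conjI impI)
  assume "is_operad P \<and> homogeneous P \<and> finitely_generated P"
  then interpret p: opok P using opok_intro by blast
  show "partial_order_on (ocarrier P) (prefix_rel P)"
    unfolding partial_order_on_def preorder_on_def
  proof (intro conjI)
    show "prefix_rel P \<subseteq> ocarrier P \<times> ocarrier P"
      unfolding prefix_rel_def using p.prefix_C by blast
    show "refl_on (ocarrier P) (prefix_rel P)"
      unfolding refl_on_def prefix_rel_def using prefix_le.refl[of _ P] by blast
    show "trans (prefix_rel P)"
      unfolding trans_def prefix_rel_def using p.prefix_trans by blast
    show "antisym (prefix_rel P)"
      unfolding antisym_def prefix_rel_def
    proof (intro allI impI)
      fix x y assume "(x, y) \<in> {(x, y). prefix_le P x y}" "(y, x) \<in> {(x, y). prefix_le P x y}"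
      then have "prefix_le P x y" "prefix_le P y x" by auto
      then have "x = y \<or> oar P x < oar P y" "y = x \<or> oar P y < oar P x" using p.prefix_ar by blast+
      then show "x = y" by auto
    qed
  qed
next
  assume h: "is_operad P \<and> homogeneous P \<and> finitely_generated P \<and>
    is_operad Q \<and> homogeneous Q \<and> finitely_generated Q \<and> operad_hom P Q \<psi>"
  then interpret p: opok P using opok_intro by blast
  interpret q: opok Q using h opok_intro by blast
  have hom: "operad_hom P Q \<psi>" using h by blast
  have hC: "\<And>x. x \<in> ocarrier P \<Longrightarrow> \<psi> x \<in> ocarrier Q \<and> oar Q (\<psi> x) = oar P x"
    using hom unfolding operad_hom_def by blast
  have hcp: "\<And>x y i. x \<in> ocarrier P \<Longrightarrow> y \<in> ocarrier P \<Longrightarrow> 1 \<le> i \<Longrightarrow> i \<le> oar P x \<Longrightarrow>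
     \<psi> (ocomp P i x y) = ocomp Q i (\<psi> x) (\<psi> y)"
    using hom unfolding operad_hom_def by blast
  show "\<forall>x y. prefix_le P x y \<longrightarrow> prefix_le Q (\<psi> x) (\<psi> y)"
  proof (intro allI impI)
    fix x y assume "prefix_le P x y"
    then show "prefix_le Q (\<psi> x) (\<psi> y)"
    proof (induction rule: prefix_le.induct)
      case (refl x) then show ?case using hC[of x] prefix_le.refl[of "\<psi> x" Q] by blast
    next
      case (step x y a i)
      have yC: "y \<in> ocarrier P" using p.prefix_C[OF step.hyps(1)] by blast
      have aC: "a \<in> ocarrier P" using step.hyps(2) by (auto simp: p.gens_eq p.indec_def)
      have e: "\<psi> (ocomp P i y a) = ocomp Q i (\<psi> y) (\<psi> a)" using hcp[OF yC aC step.hyps(3,4)] .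
      have c: "\<psi> y \<in> ocarrier Q" "oar Q (\<psi> y) = oar P y" "\<psi> a \<in> ocarrier Q"
        using hC[OF yC] hC[OF aC] by auto
      have g: "prefix_le Q (\<psi> y) (ocomp Q i (\<psi> y) (\<psi> a))"
        using q.prefix_graft[OF c(3) c(1)] c step.hyps by auto
      show ?case using q.prefix_trans[OF g step.IH] e by simp
    qed
  qed
qed auto

end
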